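(* Assume (A1), (A2), (A3) below, let $r\in\mathcal R_\epsilon$, $x_0\in\mathcal D_x(r)$, let $p$ be the fixed planned path, and consider the closed-loop PathFG+MPC trajectory $s_{k+1}=g(\tilde\xi_N^*(x_k,s_k))$, $x_{k+1}=f(x_k,\tilde\kappa(x_k,s_k))$ from an initial condition $(x_0,s_0)\in\tilde\Gamma$. Then there is $k_M\ge0$ such that $s_k=1$ for all $k\ge k_M+1$.
   Context: System: $x_{k+1}=f(x_k,u_k)$, $x_k\in\mathbb R^{n_x}$, $u_k\in\mathbb R^{n_u}$, with $\mathcal X=\{x:h_x(x)\le0\}$, $\mathcal U=\{u:h_u(u)\le0\}$. (A1) $f$ is locally Lipschitz, $h_x,h_u$ are continuous, and there are a set $\mathcal R\subseteq\mathbb R^{n_r}$ and continuous maps $r\mapsto\bar x_r\in\mathcal X$, $r\mapsto\bar u_r\in\mathcal U$ with $\bar x_r=f(\bar x_r,\bar u_r)$. For fixed $\epsilon>0$, $\mathcal R_\epsilon=\{r\in\mathcal R:h_x(\bar x_r)\le-\epsilon,\ h_u(\bar u_r)\le-\epsilon\}$. MPC: horizon $N\in\mathbb N_{>0}$, stage cost $\ell:\mathcal X\times\mathcal U\times\mathcal R_\epsilon\to\mathbb R_{\ge0}$, terminal set $\mathcal T\subseteq\mathcal X\times\mathcal R$, terminal cost $V:\mathcal T\to\mathbb R_{\ge0}$. The OCP at $(x,r)$: minimize $V(\xi_N,r)+\sum_{i=0}^{N-1}\ell(\xi_i,\mu_i,r)$ subject to $\xi_0=x$, $\xi_{i+1}=f(\xi_i,\mu_i)$,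 $\xi_i\in\mathcal X$, $\mu_i\in\mathcal U$ ($i=0,\dots,N-1$), $(\xi_N,r)\in\mathcal T$. $\Gamma=\{(x,r)\in\mathcal X\times\mathcal R_\epsilon:$ OCP feasible$\}$; $\zeta^*(x,r)=(\xi_0^*,\dots,\xi_N^*,\mu_0^*,\dots,\mu_{N-1}^* )$ is the minimizer (treated as a function), $\xi_N^*(x,r)$ its final state, $\kappa(x,r)=\mu_0^*(x,r)$. (A2) (a) $\ell$ uniformly continuous, $\ell(\bar x_r,\bar u_r,r)=0$, $\ell(x,u,r)\ge\gamma_\ell(\|x-\bar x_r\|)$ for some $\gamma_\ell\in\mathcal K_\infty$, all $(x,r)\in\Gamma$, $u\in\mathcal U$. (b) $V$ uniformly continuous, $V(\bar x_r,r)=0$, $V\ge0$ on $\mathcal T$, and some $\kappa_T:\mathcal T\to\mathcal U$ satisfies $V(f(x,\kappa_T(x,r)),r)-V(x,r)\le-\ell(x,\kappa_T(x,r),r)$ on $\mathcal T$. (c) $(x,r)\in\mathcal T\Rightarrow(f(x,\kappa_T(x,r)),r)\in\mathcal T$, $x\in\mathcal X$, $\kappa_T(x,r)\in\mathcal U$. (d) $(\bar x_r,r)\in\operatorname{int}\mathcal T$ for all $r\in\mathcal R_\epsilon$. (e) $\zeta^*$ is Lipschitz continuous. Paths: a feasible path for $(x_0,r)$, $r\in\mathcal R_\epsilon$, is $\{p(s):s\in[0,1]\}$ with $p:[0,1]\to\mathcal R_\epsilon$ continuous, $(x_0,p(0))\in\Gamma$, $p(1)=r$; $\mathcal D_x(r)$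 is the set of $x_0$ for which such a path exists. (A3) For such $(x_0,r)$ the planner returns a feasible path. With $p$ fixed: $\tilde{\mathcal T}=\{(x,s):(x,p(s))\in\mathcal T\}$, $\tilde\Gamma=\{(x,s):(x,p(s))\in\Gamma\}$, $\tilde\xi_N^*(x,s)=\xi_N^*(x,p(s))$, $\tilde\kappa(x,s)=\kappa(x,p(s))$, and $g(\xi)=\max\{s\in[0,1]:(\xi,s)\in\tilde{\mathcal T}\}$. *)

theory Defs
  imports "HOL-Analysis.Analysis"
begin

definition cset :: "('a \<Rightarrow> real ^ 'm) \<Rightarrow> 'a set" where
  "cset h = {x. \<forall>i. h x $ i \<le> 0}"

definition Reps :: "'r set \<Rightarrow> ('r \<Rightarrow> 'x) \<Rightarrow> ('r \<Rightarrow> 'u) \<Rightarrow>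
    ('x \<Rightarrow> real ^ 'm) \<Rightarrow> ('u \<Rightarrow> real ^ 'q) \<Rightarrow> real \<Rightarrow> 'r set" where
  "Reps R xbar ubar hx hu eps =
     {r \<in> R. (\<forall>i. hx (xbar r) $ i \<le> - eps) \<and> (\<forall>j. hu (ubar r) $ j \<le> - eps)}"

definition ocp_feasible :: "('x \<Rightarrow> 'u \<Rightarrow> 'x) \<Rightarrow> ('x \<Rightarrow> real ^ 'm) \<Rightarrow> ('u \<Rightarrow> real ^ 'q)
    \<Rightarrow> ('x \<times> 'r) set \<Rightarrow> nat \<Rightarrow> 'x \<Rightarrow> 'r \<Rightarrow> (nat \<Rightarrow> 'x) \<Rightarrow> (nat \<Rightarrow> 'u) \<Rightarrow> bool" where
  "ocp_feasible f hx hu T N x r \<xi> \<mu> \<longleftrightarrow>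
     \<xi> 0 = x \<and>
     (\<forall>i<N. \<xi> (Suc i) = f (\<xi> i) (\<mu> i)) \<and>
     (\<forall>i<N. \<xi> i \<in> cset hx \<and> \<mu> i \<in> cset hu) \<and>
     (\<xi> N, r) \<in> T"

definition ocp_cost :: "('x \<Rightarrow> 'u \<Rightarrow> 'r \<Rightarrow> real) \<Rightarrow> ('x \<Rightarrow> 'r \<Rightarrow> real) \<Rightarrow> nat
    \<Rightarrow> 'r \<Rightarrow> (nat \<Rightarrow> 'x) \<Rightarrow> (nat \<Rightarrow> 'u) \<Rightarrow> real" where
  "ocp_cost l V N r \<xi> \<mu> = V (\<xi> N) r + (\<Sum>i<N. l (\<xi> i) (\<mu> i) r)"

definition Gamma :: "('x \<Rightarrow> 'u \<Rightarrow> 'x) \<Rightarrow> ('x \<Rightarrow> real ^ 'm) \<Rightarrow> ('u \<Rightarrow> real ^ 'q)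
    \<Rightarrow> ('x \<times> 'r) set \<Rightarrow> nat \<Rightarrow> 'r set \<Rightarrow> ('x \<times> 'r) set" where
  "Gamma f hx hu T N Rs =
     {(x, r). x \<in> cset hx \<and> r \<in> Rs \<and> (\<exists>\<xi> \<mu>. ocp_feasible f hx hu T N x r \<xi> \<mu>)}"

definition class_K_inf :: "(real \<Rightarrow> real) \<Rightarrow> bool" where
  "class_K_inf \<gamma> \<longleftrightarrow> continuous_on {0..} \<gamma> \<and> \<gamma> 0 = 0 \<and> strict_mono_on {0..} \<gamma> \<and>
     filterlim \<gamma> at_top at_top"

definition feasible_path :: "('x \<times> 'r::topological_space) set \<Rightarrow> 'r set \<Rightarrow> 'x \<Rightarrow> 'r \<Rightarrow> (real \<Rightarrow> 'r) \<Rightarrow> bool" where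
  "feasible_path \<Gamma> Rs x0 r p \<longleftrightarrow>
     continuous_on {0..1} p \<and> p ` {0..1} \<subseteq> Rs \<and> (x0, p 0) \<in> \<Gamma> \<and> p 1 = r"

definition Dx :: "('x \<times> 'r::topological_space) set \<Rightarrow> 'r set \<Rightarrow> 'r \<Rightarrow> 'x set" where
  "Dx \<Gamma> Rs r = {x0. \<exists>p. feasible_path \<Gamma> Rs x0 r p}"

end

theory Submission
  imports Defs
begin

lemma dist_pair_le: "dist (a, b) (c, d) \<le> dist a c + dist b d"
  by (simp add: dist_Pair_Pair sqrt_sum_squares_le_sum)

lemma ocp_cost_split:
  assumes "N > 0"
  shows "ocp_cost l V N r \<xi> \<mu> = V (\<xi> N) r + l (\<xi> 0) (\<mu> 0) r + (\<Sum>i<N-1. l (\<xi> (Suc i)) (\<mu> (Suc i)) r)"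
proof -
  obtain M where N: "N = Suc M" using assms by (cases N) auto
  show ?thesis unfolding ocp_cost_def N sum.lessThan_Suc_shift by simp
qed

lemma shift_feasible:
  assumes feas: "ocp_feasible f hx hu T N x r \<xi> \<mu>" and N: "N > 0"
    and Tr': "(\<xi> N, r') \<in> T"
    and Tinv: "\<forall>(x, r)\<in>T. (f x (\<kappa>T x r), r) \<in> T \<and> x \<in> cset hx \<and> \<kappa>T x r \<in> cset hu"
  shows "ocp_feasible f hx hu T N (f x (\<mu> 0)) r'
            (\<lambda>i. if i < N then \<xi> (Suc i) else f (\<xi> N) (\<kappa>T (\<xi> N) r'))
            (\<lambda>i. if i < N - 1 then \<mu> (Suc i) else \<kappa>T (\<xi> N) r')"
    and "ocp_cost l V N r'
            (\<lambda>i. if i < N then \<xi> (Suc i) else f (\<xi> N) (\<kappa>T (\<xi> N) r'))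
            (\<lambda>i. if i < N - 1 then \<mu> (Suc i) else \<kappa>T (\<xi> N) r')
         = V (f (\<xi> N) (\<kappa>T (\<xi> N) r')) r' + l (\<xi> N) (\<kappa>T (\<xi> N) r') r'
           + (\<Sum>i<N-1. l (\<xi> (Suc i)) (\<mu> (Suc i)) r')"
proof -
  obtain M where NM: "N = Suc M" using N by (cases N) auto
  have T1: "(f (\<xi> N) (\<kappa>T (\<xi> N) r'), r') \<in> T" "\<xi> N \<in> cset hx" "\<kappa>T (\<xi> N) r' \<in> cset hu"
    using Tinv Tr' by auto
  from feas have f0: "\<xi> 0 = x" and fs: "\<forall>i<N. \<xi> (Suc i) = f (\<xi> i) (\<mu> i)"
    and fc: "\<forall>i<N. \<xi> i \<in> cset hx \<and> \<mu> i \<in> cset hu" and fT: "(\<xi> N, r) \<in> T"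
    unfolding ocp_feasible_def by auto
  have xiX: "\<xi> (Suc i) \<in> cset hx" if "i < N" for i
  proof (cases "Suc i < N")
    case True then show ?thesis using fc by blast
  next
    case False then have "Suc i = N" using that by simp
    then show ?thesis using T1 by simp
  qed
  show "ocp_feasible f hx hu T N (f x (\<mu> 0)) r'
            (\<lambda>i. if i < N then \<xi> (Suc i) else f (\<xi> N) (\<kappa>T (\<xi> N) r'))
            (\<lambda>i. if i < N - 1 then \<mu> (Suc i) else \<kappa>T (\<xi> N) r')"
    unfolding ocp_feasible_def
  proof (intro conjI allI impI)
    show "(if 0 < N then \<xi> (Suc 0) else f (\<xi> N) (\<kappa>T (\<xi> N) r')) = f x (\<mu> 0)"
      using N fs f0 by auto
  next
    fix i assume i: "i < N"
    show "(if Suc i < N then \<xi> (Suc (Suc i)) else f (\<xi> N) (\<kappa>T (\<xi> N) r')) =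
        f (if i < N then \<xi> (Suc i) else f (\<xi> N) (\<kappa>T (\<xi> N) r'))
          (if i < N - 1 then \<mu> (Suc i) else \<kappa>T (\<xi> N) r')"
      using i fs NM by (auto simp: less_Suc_eq)
    show "(if i < N then \<xi> (Suc i) else f (\<xi> N) (\<kappa>T (\<xi> N) r')) \<in> cset hx"
      using i xiX by simp
    show "(if i < N - 1 then \<mu> (Suc i) else \<kappa>T (\<xi> N) r') \<in> cset hu"
      using i fc[rule_format, of "Suc i"] T1 NM by auto
  next
    show "((if N < N then \<xi> (Suc N) else f (\<xi> N) (\<kappa>T (\<xi> N) r')), r') \<in> T"
      using T1 by simp
  qed
  show "ocp_cost l V N r'
            (\<lambda>i. if i < N then \<xi> (Suc i) else f (\<xi> N) (\<kappa>T (\<xi> N) r'))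
            (\<lambda>i. if i < N - 1 then \<mu> (Suc i) else \<kappa>T (\<xi> N) r')
         = V (f (\<xi> N) (\<kappa>T (\<xi> N) r')) r' + l (\<xi> N) (\<kappa>T (\<xi> N) r') r'
           + (\<Sum>i<N-1. l (\<xi> (Suc i)) (\<mu> (Suc i)) r')"
    unfolding ocp_cost_def NM by simp
qed

lemma kappaT_feasible:
  assumes xT: "(x, r) \<in> T"
    and Tinv: "\<forall>(x, r)\<in>T. (f x (\<kappa>T x r), r) \<in> T \<and> x \<in> cset hx \<and> \<kappa>T x r \<in> cset hu"
  shows "ocp_feasible f hx hu T N x r (\<lambda>i. ((\<lambda>y. f y (\<kappa>T y r)) ^^ i) x)
           (\<lambda>i. \<kappa>T (((\<lambda>y. f y (\<kappa>T y r)) ^^ i) x) r)"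
proof -
  have inv: "(((\<lambda>y. f y (\<kappa>T y r)) ^^ i) x, r) \<in> T" for i
    by (induction i) (use xT Tinv in auto)
  show ?thesis unfolding ocp_feasible_def using inv Tinv by fastforce
qed

theorem lemma8:
  fixes f :: "real ^ 'nx \<Rightarrow> real ^ 'nu \<Rightarrow> real ^ 'nx"
    and hx :: "real ^ 'nx \<Rightarrow> real ^ 'mx" and hu :: "real ^ 'nu \<Rightarrow> real ^ 'mu"
    and R :: "(real ^ 'nr) set"
    and xbar :: "real ^ 'nr \<Rightarrow> real ^ 'nx" and ubar :: "real ^ 'nr \<Rightarrow> real ^ 'nu"
    and eps :: real and N :: nat
    and l :: "real ^ 'nx \<Rightarrow> real ^ 'nu \<Rightarrow> real ^ 'nr \<Rightarrow> real"
    and T :: "((real ^ 'nx) \<times> (real ^ 'nr)) set"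
    and V :: "real ^ 'nx \<Rightarrow> real ^ 'nr \<Rightarrow> real"
    and \<kappa>T :: "real ^ 'nx \<Rightarrow> real ^ 'nr \<Rightarrow> real ^ 'nu"
    and \<gamma>l :: "real \<Rightarrow> real"
    and zeta :: "real ^ 'nx \<Rightarrow> real ^ 'nr \<Rightarrow> (nat \<Rightarrow> real ^ 'nx) \<times> (nat \<Rightarrow> real ^ 'nu)"
    and r :: "real ^ 'nr" and x0 :: "real ^ 'nx" and s0 :: real
    and p :: "real \<Rightarrow> real ^ 'nr"
    and xs :: "nat \<Rightarrow> real ^ 'nx" and ss :: "nat \<Rightarrow> real"
  defines "X \<equiv> cset hx" and "U \<equiv> cset hu"
    and "Rs \<equiv> Reps R xbar ubar hx hu eps"
    and "\<Gamma> \<equiv> Gamma f hx hu T N (Reps R xbar ubar hx hu eps)"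
  assumes eps_pos: "eps > 0" and N_pos: "N > 0"
    \<comment> \<open>(A1)\<close>
    and f_loc_lip: "\<forall>z. \<exists>e>0. \<exists>L. L-lipschitz_on (ball z e) (\<lambda>(x, u). f x u)"
    and hx_cont: "continuous_on UNIV hx" and hu_cont: "continuous_on UNIV hu"
    and xbar_cont: "continuous_on R xbar" and ubar_cont: "continuous_on R ubar"
    and xbar_X: "\<forall>r\<in>R. xbar r \<in> X" and ubar_U: "\<forall>r\<in>R. ubar r \<in> U"
    and equil: "\<forall>r\<in>R. xbar r = f (xbar r) (ubar r)"
    \<comment> \<open>MPC data: terminal set in X x R, stage cost and terminal cost nonnegative\<close>
    and T_sub: "T \<subseteq> X \<times> R"
    and l_nonneg: "\<forall>x\<in>X. \<forall>u\<in>U. \<forall>r\<in>Rs. l x u r \<ge> 0"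
    and V_nonneg: "\<forall>(x, r)\<in>T. V x r \<ge> 0"
    \<comment> \<open>zeta is the minimizer of the OCP on Gamma\<close>
    and zeta_feas: "\<forall>(x, r)\<in>\<Gamma>. ocp_feasible f hx hu T N x r (fst (zeta x r)) (snd (zeta x r))"
    and zeta_opt: "\<forall>(x, r)\<in>\<Gamma>. \<forall>\<xi> \<mu>. ocp_feasible f hx hu T N x r \<xi> \<mu> \<longrightarrow>
         ocp_cost l V N r (fst (zeta x r)) (snd (zeta x r)) \<le> ocp_cost l V N r \<xi> \<mu>"
    \<comment> \<open>(A2)(a)\<close>
    and l_unif: "uniformly_continuous_on (X \<times> U \<times> Rs) (\<lambda>(x, u, r). l x u r)"
    and l_zero: "\<forall>r\<in>Rs. l (xbar r) (ubar r) r = 0"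
    and \<gamma>l_K: "class_K_inf \<gamma>l"
    and l_lower: "\<forall>(x, r)\<in>\<Gamma>. \<forall>u\<in>U. l x u r \<ge> \<gamma>l (norm (x - xbar r))"
    \<comment> \<open>(A2)(b)\<close>
    and V_unif: "uniformly_continuous_on T (\<lambda>(x, r). V x r)"
    and V_zero: "\<forall>r\<in>Rs. V (xbar r) r = 0"
    and V_decr: "\<forall>(x, r)\<in>T. V (f x (\<kappa>T x r)) r - V x r \<le> - l x (\<kappa>T x r) r"
    \<comment> \<open>(A2)(c)\<close>
    and T_inv: "\<forall>(x, r)\<in>T. (f x (\<kappa>T x r), r) \<in> T \<and> x \<in> X \<and> \<kappa>T x r \<in> U"
    \<comment> \<open>(A2)(d)\<close>
    and T_int: "\<forall>r\<in>Rs. (xbar r, r) \<in> interior T"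
    \<comment> \<open>(A2)(e): zeta Lipschitz on Gamma\<close>
    and zeta_lip: "\<exists>L. \<forall>a\<in>\<Gamma>. \<forall>b\<in>\<Gamma>.
         (\<forall>i\<le>N. dist (fst (case_prod zeta a) i) (fst (case_prod zeta b) i) \<le> L * dist a b) \<and>
         (\<forall>i<N. dist (snd (case_prod zeta a) i) (snd (case_prod zeta b) i) \<le> L * dist a b)"
    \<comment> \<open>r, x0 in D_x(r), and (A3): p is the feasible path returned by the planner\<close>
    and r_in: "r \<in> Rs"
    and x0_D: "x0 \<in> Dx \<Gamma> Rs r"
    and p_path: "feasible_path \<Gamma> Rs x0 r p"
    \<comment> \<open>initial condition (x0,s0) in tilde Gamma\<close>
    and s0_in: "s0 \<in> {0..1}" and init_Gamma: "(x0, p s0) \<in> \<Gamma>"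
    \<comment> \<open>closed-loop PathFG+MPC trajectory\<close>
    and xs0: "xs 0 = x0" and ss0: "ss 0 = s0"
    and xs_step: "\<forall>k. xs (Suc k) = f (xs k) (snd (zeta (xs k) (p (ss k))) 0)"
    and ss_step: "\<forall>k. ss (Suc k) \<in> {s\<in>{0..1}. (fst (zeta (xs k) (p (ss k))) N, p s) \<in> T} \<and>
         (\<forall>s\<in>{0..1}. (fst (zeta (xs k) (p (ss k))) N, p s) \<in> T \<longrightarrow> s \<le> ss (Suc k))"
  shows "\<exists>kM. \<forall>k\<ge>kM + 1. ss k = 1"
proof -
  have RsR: "Rs \<subseteq> R" unfolding Rs_def Reps_def by auto
  have pRs: "\<forall>s\<in>{0..1}. p s \<in> Rs" using p_path unfolding feasible_path_def by auto
  have pcont: "continuous_on {0..1} p" using p_path unfolding feasible_path_def by auto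
  have Gam_iff: "(x, r') \<in> \<Gamma> \<longleftrightarrow> x \<in> X \<and> r' \<in> Rs \<and> (\<exists>\<xi> \<mu>. ocp_feasible f hx hu T N x r' \<xi> \<mu>)" for x r'
    unfolding \<Gamma>_def Gamma_def X_def Rs_def by simp
  have feasZ: "ocp_feasible f hx hu T N x r' (fst (zeta x r')) (snd (zeta x r'))" if "(x, r') \<in> \<Gamma>" for x r'
    using zeta_feas that by auto
  have optZ: "ocp_cost l V N r' (fst (zeta x r')) (snd (zeta x r')) \<le> ocp_cost l V N r' \<xi> \<mu>"
    if "(x, r') \<in> \<Gamma>" "ocp_feasible f hx hu T N x r' \<xi> \<mu>" for x r' \<xi> \<mu>
    using zeta_opt that by blast
  have TinvC: "\<forall>(x, r)\<in>T. (f x (\<kappa>T x r), r) \<in> T \<and> x \<in> cset hx \<and> \<kappa>T x r \<in> cset hu"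
    using T_inv unfolding X_def U_def by simp
  have cost_nonneg: "0 \<le> ocp_cost l V N r' \<xi> \<mu>"
    if "ocp_feasible f hx hu T N x r' \<xi> \<mu>" "r' \<in> Rs" for x r' \<xi> \<mu>
  proof -
    from that have "(\<xi> N, r') \<in> T" "\<forall>i<N. \<xi> i \<in> X \<and> \<mu> i \<in> U"
      unfolding ocp_feasible_def X_def U_def by auto
    then have "0 \<le> V (\<xi> N) r'" "\<forall>i<N. 0 \<le> l (\<xi> i) (\<mu> i) r'" using V_nonneg l_nonneg that(2) by auto
    then show ?thesis unfolding ocp_cost_def by (auto intro!: add_nonneg_nonneg sum_nonneg)
  qed
  have smono: "strict_mono_on {0..} \<gamma>l" and g0: "\<gamma>l 0 = 0" using \<gamma>l_K unfolding class_K_inf_def by auto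
  have gmono: "\<gamma>l a \<le> \<gamma>l b" if "0 \<le> a" "a \<le> b" for a b
    proof (cases "a = b")
    case False
    with that have "a < b" by simp
    with smono that have "\<gamma>l a < \<gamma>l b" by (auto simp: strict_mono_on_def)
    then show ?thesis by simp
  qed simp
  have gpos: "0 < \<gamma>l a" if "0 < a" for a
  proof -
    have "\<forall>r s. 0 \<le> r \<and> 0 \<le> s \<and> r < s \<longrightarrow> \<gamma>l r < \<gamma>l s" using smono by (auto simp: strict_mono_on_def)
    from this[rule_format, of 0 a] that g0 show ?thesis by simp
  qed
  have TGam: "(x, r') \<in> \<Gamma>" if "(x, r') \<in> T" "r' \<in> Rs" for x r'
    using kappaT_feasible[OF that(1) TinvC] that T_sub Gam_iff by blast
  have V_lower: "\<gamma>l (norm (x - xbar r')) \<le> V x r'" if "(x, r') \<in> T" "r' \<in> Rs" for x r'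
  proof -
    have a: "V (f x (\<kappa>T x r')) r' - V x r' \<le> - l x (\<kappa>T x r') r'" using V_decr that(1) by auto
    have b: "0 \<le> V (f x (\<kappa>T x r')) r'" using V_nonneg T_inv that(1) by auto
    have c: "\<gamma>l (norm (x - xbar r')) \<le> l x (\<kappa>T x r') r'"
    proof -
      have u: "\<kappa>T x r' \<in> U" using T_inv that(1) by auto
      show ?thesis using bspec[OF l_lower TGam[OF that]] u by simp
    qed
    show ?thesis using a b c by linarith
  qed
  have eqG: "(xbar r', r') \<in> \<Gamma>" 
    and eqF: "ocp_feasible f hx hu T N (xbar r') r' (\<lambda>_. xbar r') (\<lambda>_. ubar r')" if "r' \<in> Rs" for r'
  proof -
    have xT: "(xbar r', r') \<in> T" using T_int that interior_subset by blast
    have rR: "r' \<in> R" using RsR that by auto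
    show feas0: "ocp_feasible f hx hu T N (xbar r') r' (\<lambda>_. xbar r') (\<lambda>_. ubar r')"
      unfolding ocp_feasible_def using xT xbar_X ubar_U equil rR unfolding X_def U_def by auto
    show "(xbar r', r') \<in> \<Gamma>" using Gam_iff feas0 xbar_X rR that by auto
  qed
  have xi_eq: "fst (zeta (xbar r') r') N = xbar r'" if rs: "r' \<in> Rs" for r'
  proof -
    note G = eqG[OF rs] and feas0 = eqF[OF rs]
    have "ocp_cost l V N r' (\<lambda>_. xbar r') (\<lambda>_. ubar r') = 0"
      unfolding ocp_cost_def using l_zero V_zero rs by simp
    with optZ[OF G feas0] have c0: "ocp_cost l V N r' (fst (zeta (xbar r') r')) (snd (zeta (xbar r') r')) \<le> 0"
      by simp
    define \<xi> where "\<xi> = fst (zeta (xbar r') r')"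
    define \<mu> where "\<mu> = snd (zeta (xbar r') r')"
    from feasZ[OF G] have "(\<xi> N, r') \<in> T" "\<forall>i<N. \<xi> i \<in> X \<and> \<mu> i \<in> U"
      unfolding ocp_feasible_def X_def U_def \<xi>_def \<mu>_def by auto
    then have s: "0 \<le> (\<Sum>i<N. l (\<xi> i) (\<mu> i) r')" and vl: "\<gamma>l (norm (\<xi> N - xbar r')) \<le> V (\<xi> N) r'"
      using l_nonneg rs V_lower by (auto intro!: sum_nonneg)
    from c0 have "V (\<xi> N) r' + (\<Sum>i<N. l (\<xi> i) (\<mu> i) r') \<le> 0"
      unfolding ocp_cost_def \<xi>_def \<mu>_def by simp
    with s vl have "\<gamma>l (norm (\<xi> N - xbar r')) \<le> 0" by linarith
    then have "\<not> 0 < norm (\<xi> N - xbar r')" by (meson gpos not_le)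
    then show ?thesis unfolding \<xi>_def by simp
  qed
  define rr where "rr k = p (ss k)" for k
  define xi where "xi k = fst (zeta (xs k) (rr k))" for k
  define mu where "mu k = snd (zeta (xs k) (rr k))" for k
  define J where "J k = ocp_cost l V N (rr k) (xi k) (mu k)" for k
  define cx where "cx k = (\<lambda>i. if i < N then xi k (Suc i) else f (xi k N) (\<kappa>T (xi k N) (rr (Suc k))))" for k
  define cu where "cu k = (\<lambda>i. if i < N - 1 then mu k (Suc i) else \<kappa>T (xi k N) (rr (Suc k)))" for k
  have x1: "xs (Suc k) = f (xs k) (mu k 0)" for k using xs_step mu_def rr_def by simp
  have s1: "ss (Suc k) \<in> {0..1}" "(xi k N, rr (Suc k)) \<in> T" for k using ss_step xi_def rr_def by auto
  have s1max: "s \<le> ss (Suc k)" if "s \<in> {0..1}" "(xi k N, p s) \<in> T" for s k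
    using ss_step that xi_def rr_def by auto
  have inv: "ss k \<in> {0..1} \<and> (xs k, rr k) \<in> \<Gamma>" for k
  proof (induction k)
    case 0 show ?case using s0_in init_Gamma xs0 ss0 rr_def by simp
  next
    case (Suc k)
    have feas: "ocp_feasible f hx hu T N (xs k) (rr k) (xi k) (mu k)"
      using feasZ Suc.IH xi_def mu_def by simp
    have r1: "rr (Suc k) \<in> Rs" using pRs s1 rr_def by auto
    have cf: "ocp_feasible f hx hu T N (xs (Suc k)) (rr (Suc k)) (cx k) (cu k)"
      using shift_feasible(1)[OF feas N_pos s1(2) TinvC] x1 cx_def cu_def by simp
    have "cx k 0 = xs (Suc k)" "cx k 0 \<in> cset hx" using cf N_pos unfolding ocp_feasible_def by auto
    then have "xs (Suc k) \<in> X" unfolding X_def by simp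
    then show ?case using cf r1 s1(1) Gam_iff by blast
  qed
  have feasK: "ocp_feasible f hx hu T N (xs k) (rr k) (xi k) (mu k)" for k
    using feasZ inv xi_def mu_def by simp
  have rrRs: "rr k \<in> Rs" for k using pRs inv rr_def by auto
  have Jnn: "0 \<le> J k" for k using cost_nonneg[OF feasK rrRs] J_def by simp
  have ssmono1: "ss k \<le> ss (Suc k)" for k
  proof -
    have "(xi k N, p (ss k)) \<in> T" using feasK[of k] rr_def unfolding ocp_feasible_def by simp
    then show ?thesis using s1max inv by blast
  qed
  have ssmono: "ss k \<le> ss m" if "k \<le> m" for k m
    using incseq_SucI[of ss, OF ssmono1] that by (simp add: incseq_def)
  define S where "S = Sup (range ss)"
  have bdd: "bdd_above (range ss)" using inv by (auto intro!: bdd_aboveI[of _ 1])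
  have ssS: "ss k \<le> S" for k unfolding S_def using bdd by (simp add: cSUP_upper)
  have S1: "S \<le> 1" unfolding S_def using inv by (auto intro!: cSUP_least)
  have S0: "0 \<le> S" using ssS[of 0] inv[of 0] by auto
  have Sapprox: "\<exists>K. \<forall>k\<ge>K. S - e < ss k" if "e > 0" for e
  proof (rule ccontr)
    assume na: "\<not> ?thesis"
    have "\<forall>k. ss k \<le> S - e"
    proof
      fix k
      from na obtain k' where "k \<le> k'" "\<not> S - e < ss k'" by blast
      then show "ss k \<le> S - e" using ssmono[of k k'] by linarith
    qed
    then have "Sup (range ss) \<le> S - e" by (intro cSUP_least) auto
    then have "S \<le> S - e" unfolding S_def .
    with that show False by simp
  qed
  have cfK: "ocp_feasible f hx hu T N (xs (Suc k)) (rr (Suc k)) (cx k) (cu k)" for k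
      using shift_feasible(1)[OF feasK N_pos s1(2) TinvC] x1 cx_def cu_def by simp
  have candJ: "J (Suc k) \<le> V (xi k N) (rr (Suc k)) + (\<Sum>i<N-1. l (xi k (Suc i)) (mu k (Suc i)) (rr (Suc k)))" for k
  proof -
    have "J (Suc k) \<le> ocp_cost l V N (rr (Suc k)) (cx k) (cu k)"
      using optZ[OF inv[THEN conjunct2] cfK] unfolding J_def xi_def mu_def .
    also have "\<dots> = V (f (xi k N) (\<kappa>T (xi k N) (rr (Suc k)))) (rr (Suc k)) + l (xi k N) (\<kappa>T (xi k N) (rr (Suc k))) (rr (Suc k))
           + (\<Sum>i<N-1. l (xi k (Suc i)) (mu k (Suc i)) (rr (Suc k)))"
      using shift_feasible(2)[OF feasK N_pos s1(2) TinvC] unfolding cx_def cu_def .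
    also have "\<dots> \<le> V (xi k N) (rr (Suc k)) + (\<Sum>i<N-1. l (xi k (Suc i)) (mu k (Suc i)) (rr (Suc k)))"
      using V_decr s1(2)[of k] by fastforce
    finally show ?thesis .
  qed
  have Jsplit: "J k = V (xi k N) (rr k) + l (xs k) (mu k 0) (rr k) + (\<Sum>i<N-1. l (xi k (Suc i)) (mu k (Suc i)) (rr k))" for k
    using ocp_cost_split[OF N_pos, of l V "rr k" "xi k" "mu k"] feasK[of k] unfolding J_def ocp_feasible_def by simp
  have descent: "\<exists>K. \<forall>k\<ge>K. J (Suc k) \<le> J k - l (xs k) (mu k 0) (rr k) + \<eta>" if eta: "\<eta> > 0" for \<eta>
  proof -
    have e1: "\<eta> / (2 * real N) > 0" using eta N_pos by simp
    obtain d1 where d1: "d1 > 0" and d1': "\<forall>a\<in>X \<times> U \<times> Rs. \<forall>b\<in>X \<times> U \<times> Rs. dist b a < d1 \<longrightarrow>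
        dist ((\<lambda>(x, u, r). l x u r) b) ((\<lambda>(x, u, r). l x u r) a) < \<eta> / (2 * real N)"
      using l_unif[unfolded uniformly_continuous_on_def, rule_format, OF e1] by blast
    have e2: "\<eta> / 2 > 0" using eta by simp
    obtain d2 where d2: "d2 > 0" and d2': "\<forall>a\<in>T. \<forall>b\<in>T. dist b a < d2 \<longrightarrow>
        dist ((\<lambda>(x, r). V x r) b) ((\<lambda>(x, r). V x r) a) < \<eta>/2"
      using V_unif[unfolded uniformly_continuous_on_def, rule_format, OF e2] by blast
    have puc: "uniformly_continuous_on {0..1} p" using compact_uniformly_continuous[OF pcont] by simp
    have m: "min d1 d2 > 0" using d1 d2 by simp
    obtain d3 where d3: "d3 > 0" and d3': "\<forall>s\<in>{0..1}. \<forall>s'\<in>{0..1}. dist s' s < d3 \<longrightarrow> dist (p s') (p s) < min d1 d2"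
      using puc[unfolded uniformly_continuous_on_def, rule_format, OF m] by blast
    obtain K where K: "\<forall>k\<ge>K. S - d3 < ss k" using Sapprox d3 by blast
    show ?thesis
    proof (intro exI allI impI)
      fix k assume k: "K \<le> k"
      have "dist (ss (Suc k)) (ss k) < d3" using K k ssS[of "Suc k"] ssmono1[of k] by (auto simp: dist_real_def)
      then have dr: "dist (rr (Suc k)) (rr k) < min d1 d2" using d3' inv rr_def by auto
      have Vb: "V (xi k N) (rr (Suc k)) \<le> V (xi k N) (rr k) + \<eta>/2"
      proof -
        have "(xi k N, rr k) \<in> T" using feasK[of k] unfolding ocp_feasible_def by simp
        moreover have "dist (xi k N, rr (Suc k)) (xi k N, rr k) < d2" using dr by (simp add: dist_Pair_Pair)
        ultimately have "dist (V (xi k N) (rr (Suc k))) (V (xi k N) (rr k)) < \<eta>/2"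
          using d2' s1(2)[of k] by fastforce
        then show ?thesis unfolding dist_real_def abs_less_iff by linarith
      qed
      have lb: "l (xi k (Suc i)) (mu k (Suc i)) (rr (Suc k)) \<le> l (xi k (Suc i)) (mu k (Suc i)) (rr k) + \<eta> / (2 * real N)"
        if i: "i < N - 1" for i
      proof -
        have si: "Suc i < N" using i by simp
        have "\<forall>i<N. xi k i \<in> cset hx \<and> mu k i \<in> cset hu" using feasK[of k] unfolding ocp_feasible_def by blast
        then have "xi k (Suc i) \<in> X" "mu k (Suc i) \<in> U" using si unfolding X_def U_def by blast+
        moreover have "dist (xi k (Suc i), mu k (Suc i), rr (Suc k)) (xi k (Suc i), mu k (Suc i), rr k) < d1"
          using dr by (simp add: dist_Pair_Pair)
        ultimately have "dist (l (xi k (Suc i)) (mu k (Suc i)) (rr (Suc k))) (l (xi k (Suc i)) (mu k (Suc i)) (rr k)) < \<eta> / (2 * real N)"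
          using d1' rrRs[of k] rrRs[of "Suc k"] by fastforce
        then show ?thesis unfolding dist_real_def abs_less_iff by linarith
      qed
      have "(\<Sum>i<N-1. l (xi k (Suc i)) (mu k (Suc i)) (rr (Suc k))) \<le> (\<Sum>i<N-1. l (xi k (Suc i)) (mu k (Suc i)) (rr k) + \<eta> / (2 * real N))"
        using lb by (intro sum_mono) simp
      also have "\<dots> = (\<Sum>i<N-1. l (xi k (Suc i)) (mu k (Suc i)) (rr k)) + real (N-1) * (\<eta> / (2 * real N))"
        by (simp add: sum.distrib)
      finally have sb: "(\<Sum>i<N-1. l (xi k (Suc i)) (mu k (Suc i)) (rr (Suc k))) \<le> (\<Sum>i<N-1. l (xi k (Suc i)) (mu k (Suc i)) (rr k)) + real (N-1) * (\<eta> / (2 * real N))" .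
      have "real (N-1) * (\<eta> / (2 * real N)) \<le> real N * (\<eta> / (2 * real N))"
        using e1 by (intro mult_right_mono) auto
      also have "\<dots> = \<eta>/2" using N_pos by simp
      finally have nb: "real (N-1) * (\<eta> / (2 * real N)) \<le> \<eta>/2" .
      show "J (Suc k) \<le> J k - l (xs k) (mu k 0) (rr k) + \<eta>"
        using candJ[of k] Jsplit[of k] Vb sb nb by linarith
    qed
  qed
  have close: "\<exists>k\<ge>K. norm (xs k - xbar (rr k)) < c" if c: "c > 0" for c K
  proof (rule ccontr)
    assume "\<not> ?thesis"
    then have far: "\<forall>k\<ge>K. c \<le> norm (xs k - xbar (rr k))" by (auto simp: not_less)
    define g where "g = \<gamma>l c"
    have g: "g > 0" using gpos c g_def by simp
    then have g2: "g/2 > 0" by simp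
    obtain K2 where K2: "\<forall>k\<ge>K2. J (Suc k) \<le> J k - l (xs k) (mu k 0) (rr k) + g/2"
      using descent[OF g2] by blast
    define K0 where "K0 = max K K2"
    have step: "J (Suc k) \<le> J k - g/2" if kk: "K0 \<le> k" for k
    proof -
      have "mu k 0 \<in> U" using feasK[of k] N_pos unfolding ocp_feasible_def U_def by auto
      then have a: "\<gamma>l (norm (xs k - xbar (rr k))) \<le> l (xs k) (mu k 0) (rr k)" using l_lower inv[of k] by auto
      have b: "g \<le> \<gamma>l (norm (xs k - xbar (rr k)))" unfolding g_def
        using gmono c far kk K0_def by (auto intro!: gmono)
      have "J (Suc k) \<le> J k - l (xs k) (mu k 0) (rr k) + g/2" using K2 kk K0_def by auto
      then show ?thesis using a b by linarith
    qed
    have iter: "J (K0 + m) \<le> J K0 - real m * (g/2)" for m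
    proof (induction m)
      case 0 then show ?case by simp
    next
      case (Suc m)
      have "J (K0 + Suc m) \<le> J (K0 + m) - g/2" using step[of "K0+m"] by simp
      with Suc.IH show ?case by (simp add: field_simps)
    qed
    obtain m :: nat where m: "J K0 / (g/2) < real m" using reals_Archimedean2 by blast
    then have "J K0 < real m * (g/2)" using g by (simp add: field_simps)
    with iter[of m] Jnn[of "K0+m"] show False by linarith
  qed
  obtain L where L: "\<forall>a\<in>\<Gamma>. \<forall>b\<in>\<Gamma>. (\<forall>i\<le>N. dist (fst (case_prod zeta a) i) (fst (case_prod zeta b) i) \<le> L * dist a b)"
    using zeta_lip by blast
  have lipN: "dist (xi k N) (xbar (rr k)) \<le> L * dist (xs k) (xbar (rr k))" for k
  proof -
    have "dist (xi k N) (fst (zeta (xbar (rr k)) (rr k)) N) \<le> L * dist (xs k, rr k) (xbar (rr k), rr k)"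
      using L inv eqG[OF rrRs] xi_def by fastforce
    then show ?thesis using xi_eq[OF rrRs] by (simp add: dist_Pair_Pair)
  qed
  have SRs: "p S \<in> Rs" using pRs S0 S1 by auto
  obtain \<rho> where \<rho>: "\<rho> > 0" "ball (xbar (p S), p S) \<rho> \<subseteq> T"
    using T_int SRs mem_interior by blast
  have xpc: "continuous_on {0..1} (xbar \<circ> p)"
    using continuous_on_compose[OF pcont continuous_on_subset[OF xbar_cont]] pRs RsR by auto
  have r4: "\<rho>/4 > 0" using \<rho> by simp
  have Sin: "S \<in> {0..1}" using S0 S1 by simp
  obtain \<theta>1 where \<theta>1: "\<theta>1 > 0" "\<forall>s\<in>{0..1}. dist s S < \<theta>1 \<longrightarrow> dist ((xbar \<circ> p) s) ((xbar \<circ> p) S) < \<rho>/4"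
    using xpc[unfolded continuous_on_iff, rule_format, OF Sin r4] by blast
  obtain \<theta>2 where \<theta>2: "\<theta>2 > 0" "\<forall>s\<in>{0..1}. dist s S < \<theta>2 \<longrightarrow> dist (p s) (p S) < \<rho>/4"
    using pcont[unfolded continuous_on_iff, rule_format, OF Sin r4] by blast
  define \<theta> where "\<theta> = min \<theta>1 \<theta>2"
  have \<theta>: "\<theta> > 0" using \<theta>1 \<theta>2 \<theta>_def by simp
  obtain K where K: "\<forall>k\<ge>K. S - \<theta> < ss k" using Sapprox \<theta> by blast
  define c where "c = \<rho> / (4 * (\<bar>L\<bar> + 1))"
  have c: "c > 0" using \<rho> c_def by (simp add: add_pos_nonneg)
  obtain k where k: "k \<ge> K" "norm (xs k - xbar (rr k)) < c" using close[OF c] by blast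
  have dd1: "dist (xi k N) (xbar (rr k)) < \<rho>/4"
  proof -
    have "dist (xi k N) (xbar (rr k)) \<le> L * dist (xs k) (xbar (rr k))" by (rule lipN)
    also have "\<dots> \<le> \<bar>L\<bar> * dist (xs k) (xbar (rr k))" by (intro mult_right_mono) auto
    also have "\<dots> \<le> \<bar>L\<bar> * c" using k(2) by (intro mult_left_mono) (auto simp: dist_norm)
    also have "\<dots> < \<rho>/4"
    proof -
      have "\<bar>L\<bar> * c = \<bar>L\<bar> / (\<bar>L\<bar> + 1) * (\<rho>/4)" unfolding c_def by (simp add: field_simps)
      also have "\<dots> < 1 * (\<rho>/4)" using r4 by (intro mult_strict_right_mono) auto
      finally show ?thesis by simp
    qed
    finally show ?thesis .
  qed
  have sk: "ss k \<in> {0..1}" "dist (ss k) S < \<theta>" using inv[of k] K k(1) ssS[of k] by (auto simp: dist_real_def)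
  have dd2: "dist (xbar (rr k)) (xbar (p S)) < \<rho>/4" using \<theta>1 sk rr_def \<theta>_def by auto
  have big: "s \<le> ss (Suc k)" if s: "s \<in> {0..1}" "dist s S < \<theta>" for s
  proof -
    have "dist (p s) (p S) < \<rho>/4" using \<theta>2 s \<theta>_def by auto
    moreover have "dist (xi k N, p s) (xbar (p S), p S) \<le> dist (xi k N) (xbar (p S)) + dist (p s) (p S)"
      by (rule dist_pair_le)
    moreover have "dist (xi k N) (xbar (p S)) \<le> dist (xi k N) (xbar (rr k)) + dist (xbar (rr k)) (xbar (p S))"
      by (rule dist_triangle)
    ultimately have "dist (xi k N, p s) (xbar (p S), p S) < \<rho>" using dd1 dd2 \<rho>(1) by linarith
    then have "(xi k N, p s) \<in> T" using \<rho>(2) by (auto simp: dist_commute)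
    then show ?thesis using s1max s by blast
  qed
  have S_eq: "S = 1"
  proof (rule ccontr)
    assume "S \<noteq> 1" then have S1': "S < 1" using S1 by simp
    define s where "s = min 1 (S + \<theta>/2)"
    have "s \<in> {0..1}" "dist s S < \<theta>" "S < s" using S1' S0 \<theta> unfolding s_def by (auto simp: dist_real_def)
    then have "S < ss (Suc k)" using big by fastforce
    with ssS[of "Suc k"] show False by simp
  qed
  have "1 \<le> ss (Suc k)" using big[of 1] S_eq \<theta> by simp
  have "\<forall>m\<ge>k+1. ss m = 1"
  proof (intro allI impI)
    fix m assume "k + 1 \<le> m"
    then have "ss (Suc k) \<le> ss m" using ssmono by simp
    moreover have "ss m \<le> 1" using inv[of m] by simp
    ultimately show "ss m = 1" using \<open>1 \<le> ss (Suc k)\<close> by linarith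
  qed
  then show ?thesis by blast
qed

end
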